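(* Let $n\ge0$ and let $w,u\in S_n$ be such that $\operatorname{Des}(u)\subseteq\operatorname{LRM}'(w)$. Then $uw\le_{\mathrm{lex}}w$.
   Context: $S_n$ is the symmetric group on $[n]=\{1,\dots,n\}$, with product $(uw)(i)=u(w(i))$. $\operatorname{Des}(u)=\{i\in[n-1]:u(i)>u(i+1)\}$. The set of left-to-right minima of $w\in S_n$ is $\operatorname{LRM}(w)=\{i\in[n]: w(k)>i \text{ for all } k<w^{-1}(i)\}$ (the entries smaller than all entries to their left in the one-line notation $w(1)w(2)\cdots w(n)$), and $\operatorname{LRM}'(w)=\{\ell-1:\ell\in\operatorname{LRM}(w),\ \ell>1\}\subseteq[n-1]$. The relation $\le_{\mathrm{lex}}$ compares permutations by lexicographic comparison of their one-line notations $(\sigma(1),\dots,\sigma(n))$. *)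

theory Defs
  imports "HOL-Combinatorics.Permutations"
begin

text \<open>Permutations of [n] = {1..n} are functions nat => nat with w permutes {1..n}
  (identity outside {1..n}). Product (u w)(i) = u (w i), i.e. u o w.\<close>

definition Des :: "nat \<Rightarrow> (nat \<Rightarrow> nat) \<Rightarrow> nat set" where
  "Des n u = {i \<in> {1..n-1}. u i > u (Suc i)}"

definition LRM :: "nat \<Rightarrow> (nat \<Rightarrow> nat) \<Rightarrow> nat set" where
  "LRM n w = {i \<in> {1..n}. \<forall>k. 1 \<le> k \<and> k < inv w i \<longrightarrow> w k > i}"

definition LRM' :: "nat \<Rightarrow> (nat \<Rightarrow> nat) \<Rightarrow> nat set" where
  "LRM' n w = {l - 1 | l. l \<in> LRM n w \<and> l > 1}"

definition lex_le :: "nat \<Rightarrow> (nat \<Rightarrow> nat) \<Rightarrow> (nat \<Rightarrow> nat) \<Rightarrow> bool" where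
  "lex_le n s t \<longleftrightarrow> (\<forall>i\<in>{1..n}. s i = t i) \<or>
     (\<exists>k\<in>{1..n}. (\<forall>i\<in>{1..<k}. s i = t i) \<and> s k < t k)"

end

theory Submission
  imports Defs
begin

theorem lemma3p4:
  fixes n :: nat and w u :: "nat \<Rightarrow> nat"
  assumes "w permutes {1..n}" and "u permutes {1..n}"
    and "Des n u \<subseteq> LRM' n w"
  shows "lex_le n (u \<circ> w) w"
proof (cases "\<forall>i\<in>{1..n}. (u \<circ> w) i = w i")
  case True
  then show ?thesis unfolding lex_le_def by blast
next
  case False
  define P where "P = (\<lambda>k. k \<in> {1..n} \<and> u (w k) \<noteq> w k)"
  have ex: "\<exists>k. P k" using False unfolding P_def by auto
  define k where "k = (LEAST k. P k)"
  have Pk: "P k" unfolding k_def using ex by (metis LeastI)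
  have before: "\<forall>i\<in>{1..<k}. u (w i) = w i"
  proof
    fix i assume i: "i \<in> {1..<k}"
    have "\<not> P i" using i not_less_Least unfolding k_def by auto
    moreover have "i \<in> {1..n}" using i Pk unfolding P_def by auto
    ultimately show "u (w i) = w i" unfolding P_def by auto
  qed
  define v where "v = w k"
  have k1: "k \<in> {1..n}" and uv: "u v \<noteq> v" using Pk unfolding P_def v_def by auto
  have vn: "v \<in> {1..n}" using k1 assms(1) unfolding v_def by (metis permutes_in_image)
  have lrm_fixed: "u l = l" if l: "l \<in> LRM n w" "l > v" for l
  proof -
    have lin: "l \<in> {1..n}" and lk: "\<forall>p. 1 \<le> p \<and> p < inv w l \<longrightarrow> w p > l"
      using l unfolding LRM_def by auto
    have wil: "w (inv w l) = l" using assms(1) by (meson permutes_inverses(1))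
    have il: "inv w l \<in> {1..n}" using assms(1) lin
      by (metis permutes_in_image wil)
    have "inv w l \<noteq> k" using wil l(2) unfolding v_def by auto
    moreover have "\<not> k < inv w l" using lk k1 l(2) unfolding v_def by auto
    ultimately have "inv w l \<in> {1..<k}" using il by auto
    then show ?thesis using before wil by metis
  qed
  have "u v < v"
  proof (rule ccontr)
    assume "\<not> u v < v"
    then have gt: "u v > v" using uv by auto
    have ge: "u x \<ge> x" if "x \<in> {v..n}" for x
      using that
    proof (induction x rule: nat_less_induct)
      case (1 x)
      show ?case
      proof (cases "x = v")
        case True then show ?thesis using gt by simp
      next
        case False
        then obtain y where y: "x = Suc y" "y \<ge> v" using 1(2) by (cases x) auto
        have IH: "u y \<ge> y" using 1 y by auto
        show ?thesis
        proof (cases "x \<in> LRM n w")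
          case True
          then show ?thesis using lrm_fixed y by auto
        next
          case notl: False
          have "y \<notin> Des n u"
          proof
            assume "y \<in> Des n u"
            then have "y \<in> LRM' n w" using assms(3) by auto
            then obtain l where "y = l - 1" "l \<in> LRM n w" "l > 1" unfolding LRM'_def by auto
            then show False using notl y by auto
          qed
          moreover have "y \<in> {1..n-1}" using y 1(2) vn by auto
          ultimately have "\<not> u y > u x" unfolding Des_def using y by auto
          moreover have "u y \<noteq> u x" using y permutes_inj[OF assms(2)] by (metis inj_eq n_not_Suc_n)
          ultimately show ?thesis using IH y by auto
        qed
      qed
    qed
    have sub: "u ` {v..n} \<subseteq> {v..n}"
    proof
      fix z assume "z \<in> u ` {v..n}"
      then obtain x where x: "x \<in> {v..n}" "z = u x" by auto
      have "x \<in> {1..n}" using x vn by auto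
      then have "u x \<in> {1..n}" using assms(2) by (metis permutes_in_image)
      then show "z \<in> {v..n}" using ge[OF x(1)] x by auto
    qed
    have inj: "inj_on u {v..n}" using permutes_inj[OF assms(2)] by (meson inj_on_subset subset_UNIV)
    have eq: "u ` {v..n} = {v..n}"
      using sub inj by (meson card_image card_subset_eq finite_atLeastAtMost)
    have "sum u {v..n} = sum id {v..n}"
      using sum.reindex[OF inj, of id] eq by simp
    moreover have "sum id {v..n} < sum u {v..n}"
      by (rule sum_strict_mono_ex1) (use ge gt vn in auto)
    ultimately show False by simp
  qed
  then show ?thesis unfolding lex_le_def using k1 before v_def by auto
qed

end
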